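(* Let $\Phi=(A;\{E_i\}_{i=0}^d;A^*;\{E^*_i\}_{i=0}^d)$ be a tridiagonal system on $V$ with $d\ge1$, such that $(A,A^* )$ satisfies the $q$-Serre relations, with $E_iV$ the eigenspace of $A$ for $\theta_i=q^{2i-d}$ and $E^*_iV$ the eigenspace of $A^*$ for $\theta^*_i=q^{d-2i}$. Let $\{U_i\}_{i=0}^d$ be its split decomposition and $K:V\to V$ the linear map acting on $U_i$ as $q^{d-2i}I$. Then $$\frac{qKA-q^{-1}AK}{q-q^{-1}}=I,\qquad \frac{qK^{-1}A^*-q^{-1}A^*K^{-1}}{q-q^{-1}}=I.$$
   Context: $\mathcal K$ is an algebraically closed field; $V$ is a nonzero finite-dimensional vector space over $\mathcal K$; $q\in\mathcal K$ is nonzero and not a root of unity; $[3]_q=q^2+1+q^{-2}$. The $q$-Serre relations for $(X,Y)$: $X^3Y-[3]_qX^2YX+[3]_qXYX^2-YX^3=0$ and $Y^3X-[3]_qY^2XY+[3]_qYXY^2-XY^3=0$. Primitive idempotent of a diagonalizable $X$ for eigenvalue $\lambda_i$: $\prod_{j\ne i}\frac{X-\lambda_jI}{\lambda_i-\lambda_j}$. A tridiagonal system on $V$ is a sequence $(A;\{E_i\}_{i=0}^d;A^*;\{E^*_i\}_{i=0}^d)$ with $A,A^*$ diagonalizable, $\{E_i\}$, $\{E^*_i\}$ orderings of their primitive idempotents, $E_iA^*E_j=0$ and $E^*_iAE^*_j=0$ when $|i-j|>1$, and no subspaces other than $0,V$ invariant under both $A$ and $A^*$. Split decomposition: $U_i=(E^*_0V+\cdots+E^*_iV)\cap(E_iV+\cdots+E_dV)$;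 known: $V=U_0\oplus\cdots\oplus U_d$, $(A-\theta_iI)U_i\subseteq U_{i+1}$, $(A^*-\theta^*_iI)U_i\subseteq U_{i-1}$ ($U_{-1}=U_{d+1}=0$). *)

theory Defs
  imports "Jordan_Normal_Form.Jordan_Normal_Form" "HOL-Computational_Algebra.Polynomial"
begin

text \<open>Vector space V is modelled as K^n (n = dim V), linear maps as n x n matrices.\<close>

definition alg_closed_field :: "'a::field itself \<Rightarrow> bool" where
  "alg_closed_field _ \<longleftrightarrow> (\<forall>p::'a poly. degree p > 0 \<longrightarrow> (\<exists>x. poly p x = 0))"

definition diagonalizable :: "'a::field mat \<Rightarrow> bool" where
  "diagonalizable A \<longleftrightarrow> (\<exists>D. similar_mat A D \<and> diagonal_mat D)"

definition mat_prod_list :: "nat \<Rightarrow> ('i \<Rightarrow> 'a::field mat) \<Rightarrow> 'i list \<Rightarrow> 'a mat" where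
  "mat_prod_list n f xs = foldr (\<lambda>j M. f j * M) xs (1\<^sub>m n)"

definition prim_idem :: "nat \<Rightarrow> 'a::field mat \<Rightarrow> (nat \<Rightarrow> 'a) \<Rightarrow> nat \<Rightarrow> nat \<Rightarrow> 'a mat" where
  "prim_idem n X th d i =
     mat_prod_list n (\<lambda>j. (1 / (th i - th j)) \<cdot>\<^sub>m (X - th j \<cdot>\<^sub>m 1\<^sub>m n))
       (filter (\<lambda>j. j \<noteq> i) [0..<Suc d])"

definition subspace_of :: "nat \<Rightarrow> 'a::field vec set \<Rightarrow> bool" where
  "subspace_of n W \<longleftrightarrow> W \<subseteq> carrier_vec n \<and> 0\<^sub>v n \<in> W \<and>
     (\<forall>u\<in>W. \<forall>w\<in>W. u + w \<in> W) \<and> (\<forall>c. \<forall>u\<in>W. c \<cdot>\<^sub>v u \<in> W)"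

definition invariant_under :: "nat \<Rightarrow> 'a::field mat \<Rightarrow> 'a vec set \<Rightarrow> bool" where
  "invariant_under n M W \<longleftrightarrow> (\<forall>w\<in>W. M *\<^sub>v w \<in> W)"

definition mat_image :: "nat \<Rightarrow> 'a::field mat \<Rightarrow> 'a vec set" where
  "mat_image n M = {M *\<^sub>v v | v. v \<in> carrier_vec n}"

fun subspace_sum :: "nat \<Rightarrow> (nat \<Rightarrow> 'a::field vec set) \<Rightarrow> nat list \<Rightarrow> 'a vec set" where
  "subspace_sum n W [] = {0\<^sub>v n}"
| "subspace_sum n W (j # js) = {w + u | w u. w \<in> W j \<and> u \<in> subspace_sum n W js}"

definition tridiagonal_system ::
  "nat \<Rightarrow> nat \<Rightarrow> 'a::field mat \<Rightarrow> (nat \<Rightarrow> 'a) \<Rightarrow> 'a mat \<Rightarrow> (nat \<Rightarrow> 'a) \<Rightarrow> bool" where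
  "tridiagonal_system n d A th As ths \<longleftrightarrow>
     A \<in> carrier_mat n n \<and> As \<in> carrier_mat n n \<and>
     diagonalizable A \<and> diagonalizable As \<and>
     inj_on th {0..d} \<and> inj_on ths {0..d} \<and>
     {e. eigenvalue A e} = th ` {0..d} \<and> {e. eigenvalue As e} = ths ` {0..d} \<and>
     (\<forall>i\<le>d. \<forall>j\<le>d. i + 1 < j \<or> j + 1 < i \<longrightarrow>
        prim_idem n A th d i * As * prim_idem n A th d j = 0\<^sub>m n n) \<and>
     (\<forall>i\<le>d. \<forall>j\<le>d. i + 1 < j \<or> j + 1 < i \<longrightarrow>
        prim_idem n As ths d i * A * prim_idem n As ths d j = 0\<^sub>m n n) \<and>
     (\<forall>W. subspace_of n W \<and> invariant_under n A W \<and> invariant_under n As W \<longrightarrow>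
        W = {0\<^sub>v n} \<or> W = carrier_vec n)"

definition split_component ::
  "nat \<Rightarrow> nat \<Rightarrow> 'a::field mat \<Rightarrow> (nat \<Rightarrow> 'a) \<Rightarrow> 'a mat \<Rightarrow> (nat \<Rightarrow> 'a) \<Rightarrow> nat \<Rightarrow> 'a vec set" where
  "split_component n d A th As ths i =
     subspace_sum n (\<lambda>j. mat_image n (prim_idem n As ths d j)) [0..<Suc i] \<inter>
     subspace_sum n (\<lambda>j. mat_image n (prim_idem n A th d j)) [i..<Suc d]"

definition q_serre :: "nat \<Rightarrow> 'a::field \<Rightarrow> 'a mat \<Rightarrow> 'a mat \<Rightarrow> bool" where
  "q_serre n q X Y \<longleftrightarrow> (let c = q^2 + 1 + inverse (q^2) in
     X*X*X*Y - c \<cdot>\<^sub>m (X*X*Y*X) + c \<cdot>\<^sub>m (X*Y*X*X) - Y*X*X*X = 0\<^sub>m n n \<and>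
     Y*Y*Y*X - c \<cdot>\<^sub>m (Y*Y*X*Y) + c \<cdot>\<^sub>m (Y*X*Y*Y) - X*Y*Y*Y = 0\<^sub>m n n)"

end

theory Submission
  imports Defs
begin

lemma smult_mat_vec: "M \<in> carrier_mat n m \<Longrightarrow> v \<in> carrier_vec m \<Longrightarrow>
  (c \<cdot>\<^sub>m M) *\<^sub>v v = c \<cdot>\<^sub>v (M *\<^sub>v (v::'a::field vec))"
  by (intro eq_vecI) (auto simp: scalar_prod_def sum_distrib_left ac_simps)

lemma mat_unit: "M \<in> carrier_mat n m \<Longrightarrow> k < m \<Longrightarrow> M *\<^sub>v unit_vec m k = col M (k::nat)"
  for M :: "'a::field mat"
  by (intro eq_vecI) auto

lemma mat_vec_zero: "M \<in> carrier_mat n m \<Longrightarrow> M *\<^sub>v 0\<^sub>v m = (0\<^sub>v n :: 'a::field vec)"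
  by (intro eq_vecI) auto

definition vsum :: "nat \<Rightarrow> (nat \<Rightarrow> 'a::field vec) \<Rightarrow> nat list \<Rightarrow> 'a vec" where
  "vsum n g js = foldr (\<lambda>j acc. g j + acc) js (0\<^sub>v n)"

definition msum :: "nat \<Rightarrow> (nat \<Rightarrow> 'a::field mat) \<Rightarrow> nat list \<Rightarrow> 'a mat" where
  "msum n F js = foldr (\<lambda>j acc. F j + acc) js (0\<^sub>m n n)"

lemma subspace_minus:
  assumes "subspace_of n S" "u \<in> S" "w \<in> S" shows "u - w \<in> S"
proof -
  have c: "u \<in> carrier_vec n" "w \<in> carrier_vec n" using assms unfolding subspace_of_def by auto
  have "u - w = u + (-1) \<cdot>\<^sub>v w" using c by (intro eq_vecI) auto
  thus ?thesis using assms unfolding subspace_of_def by metis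
qed

lemma subspace_smult: "subspace_of n S \<Longrightarrow> u \<in> S \<Longrightarrow> c \<cdot>\<^sub>v u \<in> S"
  unfolding subspace_of_def by auto

lemma subspace_add: "subspace_of n S \<Longrightarrow> u \<in> S \<Longrightarrow> w \<in> S \<Longrightarrow> u + w \<in> S"
  unfolding subspace_of_def by auto

lemma subspace_zero: "subspace_of n S \<Longrightarrow> 0\<^sub>v n \<in> S"
  unfolding subspace_of_def by auto

lemma subspace_carrier: "subspace_of n S \<Longrightarrow> u \<in> S \<Longrightarrow> u \<in> carrier_vec n"
  unfolding subspace_of_def by auto

lemma subspace_sum_sub:
  "(\<forall>j\<in>set js. subspace_of n (W j)) \<Longrightarrow> subspace_of n (subspace_sum n W js)"
proof (induction js)
  case Nil
  then show ?case unfolding subspace_of_def by auto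
next
  case (Cons k js)
  have Wk: "subspace_of n (W k)" and IH: "subspace_of n (subspace_sum n W js)" using Cons by auto
  let ?S = "subspace_sum n W (k # js)"
  have "?S \<subseteq> carrier_vec n"
  proof
    fix x assume "x \<in> ?S"
    then obtain a b where "x = a + b" "a \<in> W k" "b \<in> subspace_sum n W js" by auto
    then show "x \<in> carrier_vec n" using Wk IH subspace_carrier add_carrier_vec by metis
  qed
  moreover have "0\<^sub>v n \<in> ?S"
    using subspace_zero[OF Wk] subspace_zero[OF IH] by (auto intro!: exI[of _ "0\<^sub>v n"])
  moreover have "\<forall>u\<in>?S. \<forall>w\<in>?S. u + w \<in> ?S"
  proof (intro ballI)
    fix u w assume "u \<in> ?S" "w \<in> ?S"
    then obtain a b c e where ab: "u = a + b" "a \<in> W k" "b \<in> subspace_sum n W js"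
      and ce: "w = c + e" "c \<in> W k" "e \<in> subspace_sum n W js" by auto
    have cr: "a \<in> carrier_vec n" "b \<in> carrier_vec n" "c \<in> carrier_vec n" "e \<in> carrier_vec n"
      using ab ce Wk IH by (auto dest: subspace_carrier)
    have "u + w = (a + c) + (b + e)" using ab ce cr by (intro eq_vecI) auto
    moreover have "a + c \<in> W k" "b + e \<in> subspace_sum n W js"
      using ab ce Wk IH by (auto intro: subspace_add)
    ultimately show "u + w \<in> ?S" by auto
  qed
  moreover have "\<forall>c. \<forall>u\<in>?S. c \<cdot>\<^sub>v u \<in> ?S"
  proof (intro allI ballI)
    fix c u assume "u \<in> ?S"
    then obtain a b where ab: "u = a + b" "a \<in> W k" "b \<in> subspace_sum n W js" by auto
    have cr: "a \<in> carrier_vec n" "b \<in> carrier_vec n"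
      using ab Wk IH by (auto dest: subspace_carrier)
    have "c \<cdot>\<^sub>v u = c \<cdot>\<^sub>v a + c \<cdot>\<^sub>v b" using ab cr by (intro eq_vecI) (auto simp: algebra_simps)
    moreover have "c \<cdot>\<^sub>v a \<in> W k" "c \<cdot>\<^sub>v b \<in> subspace_sum n W js"
      using ab Wk IH by (auto intro: subspace_smult)
    ultimately show "c \<cdot>\<^sub>v u \<in> ?S" by auto
  qed
  ultimately show ?case unfolding subspace_of_def by blast
qed

lemma subspace_sum_le:
  "subspace_of n S \<Longrightarrow> \<forall>j\<in>set js. W j \<subseteq> S \<Longrightarrow> subspace_sum n W js \<subseteq> S"
proof (induction js)
  case Nil
  then show ?case by (auto intro: subspace_zero)
next
  case (Cons k js)
  then show ?case by (auto intro!: subspace_add)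
qed

lemma subspace_sum_ge:
  "\<forall>j\<in>set js. subspace_of n (W j) \<Longrightarrow> j \<in> set js \<Longrightarrow> W j \<subseteq> subspace_sum n W js"
proof (induction js)
  case Nil
  then show ?case by auto
next
  case (Cons k js)
  show ?case
  proof
    fix w assume w: "w \<in> W j"
    have wc: "w \<in> carrier_vec n" using w Cons.prems by (auto dest: subspace_carrier)
    show "w \<in> subspace_sum n W (k # js)"
    proof (cases "j = k")
      case True
      have "w = w + 0\<^sub>v n" using wc by auto
      moreover have "0\<^sub>v n \<in> subspace_sum n W js"
        using subspace_sum_sub[of js n W] Cons.prems by (auto intro: subspace_zero)
      ultimately show ?thesis using w True by auto
    next
      case False
      have "w = 0\<^sub>v n + w" using wc by auto
      moreover have "0\<^sub>v n \<in> W k" using Cons.prems by (auto intro: subspace_zero)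
      moreover have "w \<in> subspace_sum n W js" using Cons False w by auto
      ultimately show ?thesis by auto
    qed
  qed
qed

lemma preimage_sub:
  assumes "subspace_of n S" "M \<in> carrier_mat n n"
  shows "subspace_of n {w\<in>carrier_vec n. M *\<^sub>v w \<in> S}"
  using assms unfolding subspace_of_def
  by (auto simp: mat_vec_zero mult_add_distrib_mat_vec mult_mat_vec)

lemma int_sub: "subspace_of n S \<Longrightarrow> subspace_of n T \<Longrightarrow> subspace_of n (S \<inter> T)"
  unfolding subspace_of_def by auto

lemma image_sub:
  assumes M: "M \<in> carrier_mat n n" shows "subspace_of n (mat_image n M)"
  unfolding subspace_of_def mat_image_def
proof (intro conjI ballI allI)
  show "{M *\<^sub>v v |v. v \<in> carrier_vec n} \<subseteq> carrier_vec n" using M by auto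
  show "0\<^sub>v n \<in> {M *\<^sub>v v |v. v \<in> carrier_vec n}" using M mat_vec_zero[OF M]
    by (auto intro!: exI[of _ "0\<^sub>v n"])
  fix u w assume "u \<in> {M *\<^sub>v v |v. v \<in> carrier_vec n}" "w \<in> {M *\<^sub>v v |v. v \<in> carrier_vec n}"
  then obtain x y where "u = M *\<^sub>v x" "w = M *\<^sub>v y" "x \<in> carrier_vec n" "y \<in> carrier_vec n" by auto
  then show "u + w \<in> {M *\<^sub>v v |v. v \<in> carrier_vec n}" using M
    by (auto simp: mult_add_distrib_mat_vec intro!: exI[of _ "x + y"])
next
  fix c u assume "u \<in> {M *\<^sub>v v |v. v \<in> carrier_vec n}"
  then obtain x where "u = M *\<^sub>v x" "x \<in> carrier_vec n" by auto
  then show "c \<cdot>\<^sub>v u \<in> {M *\<^sub>v v |v. v \<in> carrier_vec n}" using M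
    by (auto simp: mult_mat_vec intro!: exI[of _ "c \<cdot>\<^sub>v x"])
qed

lemma image_in: "x \<in> carrier_vec n \<Longrightarrow> M *\<^sub>v x \<in> mat_image n M"
  unfolding mat_image_def by auto

lemma vsum_in: "subspace_of n S \<Longrightarrow> \<forall>k\<in>set ks. g k \<in> S \<Longrightarrow> vsum n g ks \<in> S"
  by (induction ks) (auto simp: vsum_def intro: subspace_zero subspace_add)

lemma vsum_carrier: "\<forall>k\<in>set ks. g k \<in> carrier_vec n \<Longrightarrow> vsum n g ks \<in> carrier_vec n"
  by (induction ks) (auto simp: vsum_def)

lemma msum_carrier: "\<forall>k\<in>set ks. F k \<in> carrier_mat n n \<Longrightarrow> msum n F ks \<in> carrier_mat n n"
  by (induction ks) (auto simp: msum_def)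

lemma msum_vec: "\<forall>k\<in>set ks. F k \<in> carrier_mat n n \<Longrightarrow> v \<in> carrier_vec n \<Longrightarrow>
   msum n F ks *\<^sub>v v = vsum n (\<lambda>j. F j *\<^sub>v v) ks"
proof (induction ks)
  case Nil
  then show ?case by (auto simp: msum_def vsum_def intro!: eq_vecI)
next
  case (Cons k ks)
  have "msum n F (k # ks) = F k + msum n F ks" by (simp add: msum_def)
  then show ?case using Cons msum_carrier[of ks F n]
    by (simp add: add_mult_distrib_mat_vec[of _ n n] vsum_def)
qed

lemma vsum_zero: "\<forall>j\<in>set js. g j = 0\<^sub>v n \<Longrightarrow> vsum n g js = 0\<^sub>v n"
  by (induction js) (auto simp: vsum_def)

lemma vsum_delta:
  assumes "distinct js" "i \<in> set js" "\<forall>j\<in>set js. j \<noteq> i \<longrightarrow> g j = 0\<^sub>v n" "g i = w"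
    "w \<in> carrier_vec n"
  shows "vsum n g js = w"
  using assms
proof (induction js)
  case Nil
  then show ?case by auto
next
  case (Cons k js)
  show ?case
  proof (cases "k = i")
    case True
    then have "vsum n g js = 0\<^sub>v n" using Cons.prems by (intro vsum_zero) auto
    then show ?thesis using True Cons.prems by (auto simp: vsum_def)
  next
    case False
    then have "vsum n g js = w" using Cons by auto
    then show ?thesis using False Cons.prems by (auto simp: vsum_def)
  qed
qed

lemma mat_prod_list_carrier:
  "\<forall>j\<in>set xs. f j \<in> carrier_mat n n \<Longrightarrow> mat_prod_list n f xs \<in> carrier_mat n n"
  by (induction xs) (auto simp: mat_prod_list_def)

lemma mat_prod_list_vec:
  assumes "\<forall>j\<in>set xs. f j \<in> carrier_mat n n \<and> f j *\<^sub>v v = c j \<cdot>\<^sub>v v" "v \<in> carrier_vec n"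
  shows "mat_prod_list n f xs *\<^sub>v v = prod_list (map c xs) \<cdot>\<^sub>v (v :: 'a::field vec)"
  using assms
proof (induction xs)
  case Nil
  then show ?case by (auto simp: mat_prod_list_def intro!: eq_vecI)
next
  case (Cons j xs)
  have M: "mat_prod_list n f xs \<in> carrier_mat n n" using Cons.prems
    by (intro mat_prod_list_carrier) auto
  have fj: "f j \<in> carrier_mat n n" "f j *\<^sub>v v = c j \<cdot>\<^sub>v v" using Cons.prems by auto
  have "mat_prod_list n f (j # xs) = f j * mat_prod_list n f xs" by (simp add: mat_prod_list_def)
  then have "mat_prod_list n f (j # xs) *\<^sub>v v = f j *\<^sub>v (mat_prod_list n f xs *\<^sub>v v)"
    using assoc_mult_mat_vec[OF fj(1) M Cons.prems(2)] by simp
  also have "\<dots> = f j *\<^sub>v (prod_list (map c xs) \<cdot>\<^sub>v v)" using Cons by auto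
  also have "\<dots> = prod_list (map c xs) \<cdot>\<^sub>v (c j \<cdot>\<^sub>v v)"
    using mult_mat_vec[OF fj(1) Cons.prems(2), of "prod_list (map c xs)"] fj(2) by simp
  also have "\<dots> = prod_list (map c (j # xs)) \<cdot>\<^sub>v v" using Cons.prems by (intro eq_vecI) auto
  finally show ?case .
qed

lemma prim_idem_carrier: "A \<in> carrier_mat n n \<Longrightarrow> prim_idem n A th d j \<in> carrier_mat n n"
  unfolding prim_idem_def by (intro mat_prod_list_carrier) auto

lemma prim_idem_eig:
  assumes A: "A \<in> carrier_mat n n" and inj: "inj_on th {0..d}" and i: "i \<le> d" and j: "j \<le> d"
    and v: "v \<in> carrier_vec n" and Av: "A *\<^sub>v v = th i \<cdot>\<^sub>v v"
  shows "prim_idem n A th d j *\<^sub>v v = (if j = i then v else 0\<^sub>v n)"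
proof -
  let ?xs = "filter (\<lambda>k. k \<noteq> j) [0..<Suc d]"
  let ?c = "\<lambda>k. (1 / (th j - th k)) * (th i - th k)"
  have "\<forall>k\<in>set ?xs. (1 / (th j - th k)) \<cdot>\<^sub>m (A - th k \<cdot>\<^sub>m 1\<^sub>m n) \<in> carrier_mat n n \<and>
     ((1 / (th j - th k)) \<cdot>\<^sub>m (A - th k \<cdot>\<^sub>m 1\<^sub>m n)) *\<^sub>v v = ?c k \<cdot>\<^sub>v v"
  proof
    fix k assume "k \<in> set ?xs"
    have "((1 / (th j - th k)) \<cdot>\<^sub>m (A - th k \<cdot>\<^sub>m 1\<^sub>m n)) *\<^sub>v v
        = (1 / (th j - th k)) \<cdot>\<^sub>v (A *\<^sub>v v - (th k \<cdot>\<^sub>m 1\<^sub>m n) *\<^sub>v v)"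
    proof -
      have c1: "A - th k \<cdot>\<^sub>m 1\<^sub>m n \<in> carrier_mat n n" by (intro minus_carrier_mat) simp
      have c2: "th k \<cdot>\<^sub>m 1\<^sub>m n \<in> carrier_mat n n" by simp
      show ?thesis by (subst smult_mat_vec[OF c1 v], subst minus_mult_distrib_mat_vec[OF A c2 v]) simp
    qed
    also have "\<dots> = ?c k \<cdot>\<^sub>v v" using A v Av
      by (intro eq_vecI) (auto simp: diff_divide_distrib right_diff_distrib left_diff_distrib times_divide_eq_left mult.commute)
    finally show "(1 / (th j - th k)) \<cdot>\<^sub>m (A - th k \<cdot>\<^sub>m 1\<^sub>m n) \<in> carrier_mat n n \<and>
     ((1 / (th j - th k)) \<cdot>\<^sub>m (A - th k \<cdot>\<^sub>m 1\<^sub>m n)) *\<^sub>v v = ?c k \<cdot>\<^sub>v v" using A by auto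
  qed
  then have "prim_idem n A th d j *\<^sub>v v = prod_list (map ?c ?xs) \<cdot>\<^sub>v v"
    unfolding prim_idem_def by (intro mat_prod_list_vec v)
  also have "prod_list (map ?c ?xs) = prod ?c (set ?xs)"
    by (subst prod.distinct_set_conv_list) auto
  also have "prod ?c (set ?xs) = (if j = i then 1 else 0)"
  proof (cases "j = i")
    case True
    have "prod ?c (set ?xs) = prod (\<lambda>_. 1) (set ?xs)"
    proof (rule prod.cong)
      fix k assume "k \<in> set ?xs"
      then have "k \<le> d" "k \<noteq> j" by (auto simp del: upt_Suc)
      then have "th j \<noteq> th k" using inj j unfolding inj_on_def by auto
      then show "?c k = 1" using True by auto
    qed simp
    then show ?thesis using True by simp
  next
    case False
    have "i \<in> set ?xs" using False i by (auto simp del: upt_Suc)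
    then have "prod ?c (set ?xs) = 0" by (intro prod_zero) auto
    then show ?thesis using False by simp
  qed
  finally show ?thesis using v by (auto intro!: eq_vecI)
qed

lemma eigenbasis:
  fixes d :: nat
  assumes A: "A \<in> carrier_mat n n" and dg: "diagonalizable A"
    and ev: "{e. eigenvalue A e} = th ` {0..d}"
  shows "\<exists>P Q. P \<in> carrier_mat n n \<and> Q \<in> carrier_mat n n \<and> P * Q = 1\<^sub>m n \<and>
     (\<forall>k<n. \<exists>i\<le>d. A *\<^sub>v col P k = th i \<cdot>\<^sub>v col P k)"
proof -
  obtain D P Q where w: "similar_mat_wit A D P Q" and Dd: "diagonal_mat D"
    using dg unfolding diagonalizable_def similar_mat_def by auto
  have dr: "dim_row A = n" using A by auto
  have cr: "D \<in> carrier_mat n n" "P \<in> carrier_mat n n" "Q \<in> carrier_mat n n"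
    and PQ: "P * Q = 1\<^sub>m n" and QP: "Q * P = 1\<^sub>m n" and AD: "A = P * D * Q"
    using w unfolding similar_mat_wit_def dr Let_def by auto
  have "\<forall>k<n. \<exists>i\<le>d. A *\<^sub>v col P k = th i \<cdot>\<^sub>v col P k"
  proof (intro allI impI)
    fix k assume k: "k < n"
    let ?e = "unit_vec n k"
    have cP: "col P k = P *\<^sub>v ?e" using mat_unit[OF cr(2) k] by simp
    have Qc: "Q *\<^sub>v col P k = ?e" unfolding cP
      using assoc_mult_mat_vec[OF cr(3) cr(2), of ?e] QP by simp
    have De: "D *\<^sub>v ?e = D $$ (k,k) \<cdot>\<^sub>v ?e"
      using mat_unit[OF cr(1) k] Dd cr(1) k unfolding diagonal_mat_def
      by (auto intro!: eq_vecI)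
    have cc: "col P k \<in> carrier_vec n" using cr k by auto
    have "A *\<^sub>v col P k = (P * D) *\<^sub>v (Q *\<^sub>v col P k)"
      unfolding AD by (rule assoc_mult_mat_vec[of _ n n]) (use cr cc in auto)
    also have "\<dots> = P *\<^sub>v (D *\<^sub>v (Q *\<^sub>v col P k))"
      by (rule assoc_mult_mat_vec[of _ n n]) (use cr cc in auto)
    also have "\<dots> = D $$ (k,k) \<cdot>\<^sub>v col P k"
      by (simp add: Qc De mult_mat_vec[OF cr(2) unit_vec_carrier] cP[symmetric])
    finally have Ac: "A *\<^sub>v col P k = D $$ (k,k) \<cdot>\<^sub>v col P k" .
    have "col P k \<noteq> 0\<^sub>v n"
    proof
      assume z: "col P k = 0\<^sub>v n"
      have "Q *\<^sub>v col P k = 0\<^sub>v n" using z mat_vec_zero[OF cr(3)] by simp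
      then show False using Qc k unit_vec_nonzero[of k n] by simp
    qed
    then have "eigenvalue A (D $$ (k,k))"
      unfolding eigenvalue_def eigenvector_def using Ac dr cc by (auto intro!: exI[of _ "col P k"])
    then have "D $$ (k,k) \<in> {e. eigenvalue A e}" by simp
    then have "D $$ (k,k) \<in> th ` {0..d}" unfolding ev .
    then obtain i where "i \<in> {0..d}" "D $$ (k,k) = th i" by blast
    then show "\<exists>i\<le>d. A *\<^sub>v col P k = th i \<cdot>\<^sub>v col P k" using Ac by auto
  qed
  then show ?thesis using cr PQ by blast
qed

lemma mat_ext:
  assumes P: "P \<in> carrier_mat n n" "Q \<in> carrier_mat n n" "P * Q = 1\<^sub>m n"
    and M: "M \<in> carrier_mat n n" "N \<in> carrier_mat n n"
    and eq: "\<forall>k<n. M *\<^sub>v col P k = N *\<^sub>v col P k"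
  shows "M = (N :: 'a::field mat)"
proof -
  have "M * P = N * P"
  proof (rule mat_col_eqI)
    fix i assume "i < dim_col (N * P)"
    then have i: "i < n" using P M by simp
    show "col (M * P) i = col (N * P) i"
      using col_mult2[OF M(1) P(1) i] col_mult2[OF M(2) P(1) i] eq i by simp
  qed (use P M in simp_all)
  then have "M * P * Q = N * P * Q" by simp
  moreover have "M * P * Q = M" using assoc_mult_mat[OF M(1) P(1) P(2)] P(3) M(1) by simp
  moreover have "N * P * Q = N" using assoc_mult_mat[OF M(2) P(1) P(2)] P(3) M(2) by simp
  ultimately show ?thesis by simp
qed

lemma idem_props:
  assumes A: "A \<in> carrier_mat n n" and dg: "diagonalizable A" and inj: "inj_on th {0..d}"
    and ev: "{e. eigenvalue A e} = th ` {0..d}"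
  shows "\<forall>j\<le>d. A * prim_idem n A th d j = th j \<cdot>\<^sub>m prim_idem n A th d j"
    and "msum n (prim_idem n A th d) [0..<Suc d] = 1\<^sub>m n"
proof -
  obtain P Q where PQ: "P \<in> carrier_mat n n" "Q \<in> carrier_mat n n" "P * Q = 1\<^sub>m n"
    and eig: "\<forall>k<n. \<exists>i\<le>d. A *\<^sub>v col P k = th i \<cdot>\<^sub>v col P k"
    using eigenbasis[OF A dg ev] by blast
  have Ec: "\<And>j. prim_idem n A th d j \<in> carrier_mat n n" using prim_idem_carrier[OF A] .
  show "\<forall>j\<le>d. A * prim_idem n A th d j = th j \<cdot>\<^sub>m prim_idem n A th d j"
  proof (intro allI impI)
    fix j assume j: "j \<le> d"
    show "A * prim_idem n A th d j = th j \<cdot>\<^sub>m prim_idem n A th d j"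
    proof (rule mat_ext[OF PQ])
      show "A * prim_idem n A th d j \<in> carrier_mat n n" using A Ec by auto
      show "th j \<cdot>\<^sub>m prim_idem n A th d j \<in> carrier_mat n n" using Ec by auto
      show "\<forall>k<n. A * prim_idem n A th d j *\<^sub>v col P k = th j \<cdot>\<^sub>m prim_idem n A th d j *\<^sub>v col P k"
      proof (intro allI impI)
        fix k assume k: "k < n"
        obtain i where i: "i \<le> d" "A *\<^sub>v col P k = th i \<cdot>\<^sub>v col P k" using eig k by blast
        have c: "col P k \<in> carrier_vec n" using PQ k by auto
        have E: "prim_idem n A th d j *\<^sub>v col P k = (if j = i then col P k else 0\<^sub>v n)"
          using prim_idem_eig[OF A inj i(1) j c i(2)] .
        show "A * prim_idem n A th d j *\<^sub>v col P k = th j \<cdot>\<^sub>m prim_idem n A th d j *\<^sub>v col P k"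
          using assoc_mult_mat_vec[OF A Ec c] smult_mat_vec[OF Ec c] E i(2) mat_vec_zero[OF A]
          by auto
      qed
    qed
  qed
  show "msum n (prim_idem n A th d) [0..<Suc d] = 1\<^sub>m n"
  proof (rule mat_ext[OF PQ])
    show "msum n (prim_idem n A th d) [0..<Suc d] \<in> carrier_mat n n"
      using Ec by (intro msum_carrier) auto
    show "1\<^sub>m n \<in> carrier_mat n n" by simp
    show "\<forall>k<n. msum n (prim_idem n A th d) [0..<Suc d] *\<^sub>v col P k = 1\<^sub>m n *\<^sub>v col P k"
    proof (intro allI impI)
      fix k assume k: "k < n"
      obtain i where i: "i \<le> d" "A *\<^sub>v col P k = th i \<cdot>\<^sub>v col P k" using eig k by blast
      have c: "col P k \<in> carrier_vec n" using PQ k by auto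
      have "msum n (prim_idem n A th d) [0..<Suc d] *\<^sub>v col P k
          = vsum n (\<lambda>j. prim_idem n A th d j *\<^sub>v col P k) [0..<Suc d]"
        using Ec c by (intro msum_vec) auto
      also have "\<dots> = col P k"
      proof (rule vsum_delta[where i = i])
        show "\<forall>j\<in>set [0..<Suc d]. j \<noteq> i \<longrightarrow> prim_idem n A th d j *\<^sub>v col P k = 0\<^sub>v n"
          using prim_idem_eig[OF A inj i(1) _ c i(2)] by (auto simp del: upt_Suc)
        show "prim_idem n A th d i *\<^sub>v col P k = col P k"
          using prim_idem_eig[OF A inj i(1) i(1) c i(2)] by simp
      qed (use i c in \<open>auto simp del: upt_Suc\<close>)
      finally show "msum n (prim_idem n A th d) [0..<Suc d] *\<^sub>v col P k = 1\<^sub>m n *\<^sub>v col P k"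
        using c by simp
    qed
  qed
qed

lemma decomp:
  assumes F: "\<And>k. F k \<in> carrier_mat n n" and sm: "msum n F [0..<Suc d] = 1\<^sub>m n"
    and S: "subspace_of n S" and y: "y \<in> carrier_vec n" and all: "\<forall>k\<le>d. F k *\<^sub>v y \<in> S"
  shows "y \<in> S"
proof -
  have "y = msum n F [0..<Suc d] *\<^sub>v y" using sm y by simp
  also have "\<dots> = vsum n (\<lambda>j. F j *\<^sub>v y) [0..<Suc d]" using F y by (intro msum_vec) auto
  finally show ?thesis using vsum_in[OF S, of "[0..<Suc d]" "\<lambda>j. F j *\<^sub>v y"] all
    by (simp del: upt_Suc)
qed

lemma shift_vec: "A \<in> carrier_mat n n \<Longrightarrow> u \<in> carrier_vec n \<Longrightarrow>
   (A - c \<cdot>\<^sub>m 1\<^sub>m n) *\<^sub>v u = A *\<^sub>v u - c \<cdot>\<^sub>v (u :: 'a::field vec)"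
proof -
  assume A: "A \<in> carrier_mat n n" and u: "u \<in> carrier_vec n"
  have c2: "c \<cdot>\<^sub>m 1\<^sub>m n \<in> carrier_mat n n" by simp
  show ?thesis by (subst minus_mult_distrib_mat_vec[OF A c2 u], subst smult_mat_vec[OF _ u]) (use u in auto)
qed

lemma fixed_sub: assumes N: "N \<in> carrier_mat n n"
  shows "subspace_of n {v\<in>carrier_vec n. N *\<^sub>v v = (v::'a::field vec)}"
  using N unfolding subspace_of_def
  by (auto simp: mat_vec_zero mult_add_distrib_mat_vec mult_mat_vec)

lemma ident: assumes N: "N \<in> carrier_mat n n" and all: "\<forall>v\<in>carrier_vec n. N *\<^sub>v v = (v::'a::field vec)"
  shows "N = 1\<^sub>m n"
proof (rule mat_ext[of "1\<^sub>m n" n "1\<^sub>m n"])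
  show "\<forall>k<n. N *\<^sub>v col (1\<^sub>m n) k = 1\<^sub>m n *\<^sub>v col (1\<^sub>m n) k"
    using all by auto
qed (use N in auto)

lemma scal:
  fixes q q' t s s1 x y :: "'a::field"
  assumes "q - q' \<noteq> 0" "t * s = 1" "q * s1 = q' * s \<or> y = 0"
  shows "1 / (q - q') * (q * (t * (s * x) + s1 * y) - q' * (s * (t * x + y))) = x"
proof -
  have "q * (t * (s * x) + s1 * y) - q' * (s * (t * x + y)) = (q - q') * ((t * s) * x) + (q * s1 - q' * s) * y"
    by (simp add: algebra_simps)
  also have "\<dots> = (q - q') * x" using assms(2,3) by auto
  finally show ?thesis using assms(1) by simp
qed

lemma combo:
  assumes K: "K \<in> carrier_mat n n" and A: "A \<in> carrier_mat n n" and u: "u \<in> carrier_vec n"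
  shows "(c \<cdot>\<^sub>m (q \<cdot>\<^sub>m (K * A) - q' \<cdot>\<^sub>m (A * K))) *\<^sub>v u
     = c \<cdot>\<^sub>v (q \<cdot>\<^sub>v (K *\<^sub>v (A *\<^sub>v u)) - q' \<cdot>\<^sub>v (A *\<^sub>v (K *\<^sub>v (u :: 'a::field vec))))"
proof -
  have c1: "q \<cdot>\<^sub>m (K * A) \<in> carrier_mat n n" "q' \<cdot>\<^sub>m (A * K) \<in> carrier_mat n n" "K * A \<in> carrier_mat n n"
    "A * K \<in> carrier_mat n n" using K A by auto
  have c2: "q \<cdot>\<^sub>m (K * A) - q' \<cdot>\<^sub>m (A * K) \<in> carrier_mat n n" using c1 by (intro minus_carrier_mat) auto
  show ?thesis
    apply (subst smult_mat_vec[OF c2 u])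
    apply (subst minus_mult_distrib_mat_vec[OF c1(1,2) u])
    apply (subst smult_mat_vec[OF c1(3) u])
    apply (subst smult_mat_vec[OF c1(4) u])
    using K A u by simp
qed

lemma powi_facts:
  fixes q :: "'a::field"
  assumes q: "q \<noteq> 0"
  shows "q powi (2 * int i - int d) * q powi (int d - 2 * int i) = 1"
    and "q * q powi (int d - 2 * int (Suc i)) = inverse q * q powi (int d - 2 * int i)"
    and "q powi (int d - 2 * int i) \<noteq> 0"
proof -
  show "q powi (2 * int i - int d) * q powi (int d - 2 * int i) = 1"
    using q by (simp add: power_int_add[symmetric])
  have h1: "q * q powi a = q powi (a + 1)" for a :: int
    using q by (simp add: power_int_add mult.commute)
  have h2: "inverse q * q powi b = q powi (b - 1)" for b :: int
    using q by (simp add: power_int_diff divide_inverse mult.commute)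
  have "int d - 2 * int (Suc i) + 1 = int d - 2 * int i - 1" by simp
  then show "q * q powi (int d - 2 * int (Suc i)) = inverse q * q powi (int d - 2 * int i)"
    unfolding h1 h2 by metis
  show "q powi (int d - 2 * int i) \<noteq> 0" using q by simp
qed

theorem lemma7p1:
  fixes n d :: nat and q :: "'a::field" and A As K Kinv :: "'a mat"
  assumes "alg_closed_field TYPE('a)"
    and "n > 0"
    and "q \<noteq> 0" and "\<forall>m::nat. m > 0 \<longrightarrow> q ^ m \<noteq> 1"
    and "d \<ge> 1"
    and "tridiagonal_system n d A (\<lambda>i. q powi (2 * int i - int d))
                               As (\<lambda>i. q powi (int d - 2 * int i))"
    and "q_serre n q A As"
    and "K \<in> carrier_mat n n"
    and "\<forall>i\<le>d. \<forall>u \<in> split_component n d A (\<lambda>i. q powi (2 * int i - int d))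
                                   As (\<lambda>i. q powi (int d - 2 * int i)) i.
            K *\<^sub>v u = q powi (int d - 2 * int i) \<cdot>\<^sub>v u"
    and "Kinv \<in> carrier_mat n n" and "K * Kinv = 1\<^sub>m n" and "Kinv * K = 1\<^sub>m n"
  shows "(1 / (q - inverse q)) \<cdot>\<^sub>m (q \<cdot>\<^sub>m (K * A) - inverse q \<cdot>\<^sub>m (A * K)) = 1\<^sub>m n \<and>
         (1 / (q - inverse q)) \<cdot>\<^sub>m (q \<cdot>\<^sub>m (Kinv * As) - inverse q \<cdot>\<^sub>m (As * Kinv)) = 1\<^sub>m n"
proof -
  note q = assms(3)
  note Kc = assms(8) and Kic = assms(10) and KiK = assms(12)
  define th where "th = (\<lambda>i::nat. q powi (2 * int i - int d))"
  define ths where "ths = (\<lambda>i::nat. q powi (int d - 2 * int i))"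
  have T: "tridiagonal_system n d A th As ths" unfolding th_def ths_def by (rule assms(6))
  have Khyp: "\<forall>i\<le>d. \<forall>u\<in>split_component n d A th As ths i. K *\<^sub>v u = ths i \<cdot>\<^sub>v u"
    unfolding th_def ths_def by (rule assms(9))
  have A: "A \<in> carrier_mat n n"
    using T unfolding tridiagonal_system_def by (elim conjE) assumption
  have As: "As \<in> carrier_mat n n"
    using T unfolding tridiagonal_system_def by (elim conjE) assumption
  have dA: "diagonalizable A"
    using T unfolding tridiagonal_system_def by (elim conjE) assumption
  have dAs: "diagonalizable As"
    using T unfolding tridiagonal_system_def by (elim conjE) assumption
  have injA: "inj_on th {0..d}"
    using T unfolding tridiagonal_system_def by (elim conjE) assumption
  have injAs: "inj_on ths {0..d}"
    using T unfolding tridiagonal_system_def by (elim conjE) assumption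
  have evA: "{e. eigenvalue A e} = th ` {0..d}"
    using T unfolding tridiagonal_system_def by (elim conjE) assumption
  have evAs: "{e. eigenvalue As e} = ths ` {0..d}"
    using T unfolding tridiagonal_system_def by (elim conjE) assumption
  have tri1: "\<forall>i\<le>d. \<forall>j\<le>d. i + 1 < j \<or> j + 1 < i \<longrightarrow>
        prim_idem n A th d i * As * prim_idem n A th d j = 0\<^sub>m n n"
    using T unfolding tridiagonal_system_def by (elim conjE) assumption
  have tri2: "\<forall>i\<le>d. \<forall>j\<le>d. i + 1 < j \<or> j + 1 < i \<longrightarrow>
        prim_idem n As ths d i * A * prim_idem n As ths d j = 0\<^sub>m n n"
    using T unfolding tridiagonal_system_def by (elim conjE) assumption
  have irr: "\<forall>W. subspace_of n W \<and> invariant_under n A W \<and> invariant_under n As W \<longrightarrow>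
        W = {0\<^sub>v n} \<or> W = carrier_vec n"
    using T unfolding tridiagonal_system_def by (elim conjE) assumption
  define E where "E = prim_idem n A th d"
  define Es where "Es = prim_idem n As ths d"
  have Ec: "\<And>j. E j \<in> carrier_mat n n" unfolding E_def by (rule prim_idem_carrier[OF A])
  have Esc: "\<And>j. Es j \<in> carrier_mat n n" unfolding Es_def by (rule prim_idem_carrier[OF As])
  have EA: "\<And>j. j \<le> d \<Longrightarrow> A * E j = th j \<cdot>\<^sub>m E j"
    using idem_props(1)[OF A dA injA evA] unfolding E_def by auto
  have Esum: "msum n E [0..<Suc d] = 1\<^sub>m n"
    using idem_props(2)[OF A dA injA evA] unfolding E_def .
  have EsAs: "\<And>j. j \<le> d \<Longrightarrow> As * Es j = ths j \<cdot>\<^sub>m Es j"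
    using idem_props(1)[OF As dAs injAs evAs] unfolding Es_def by auto
  have Essum: "msum n Es [0..<Suc d] = 1\<^sub>m n"
    using idem_props(2)[OF As dAs injAs evAs] unfolding Es_def .
  have tri1': "\<And>i j. i \<le> d \<Longrightarrow> j \<le> d \<Longrightarrow> i + 1 < j \<or> j + 1 < i \<Longrightarrow> E i * As * E j = 0\<^sub>m n n"
    using tri1 unfolding E_def by blast
  have tri2': "\<And>i j. i \<le> d \<Longrightarrow> j \<le> d \<Longrightarrow> i + 1 < j \<or> j + 1 < i \<Longrightarrow> Es i * A * Es j = 0\<^sub>m n n"
    using tri2 unfolding Es_def by blast
  have imE: "\<And>j. subspace_of n (mat_image n (E j))" by (rule image_sub[OF Ec])
  have imEs: "\<And>j. subspace_of n (mat_image n (Es j))" by (rule image_sub[OF Esc])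
  define Vs where "Vs i = subspace_sum n (\<lambda>j. mat_image n (Es j)) [0..<Suc i]" for i
  define Wd where "Wd i = subspace_sum n (\<lambda>j. mat_image n (E j)) [i..<Suc d]" for i
  define U where "U i = Vs i \<inter> Wd i" for i
  have U_split: "\<And>i. split_component n d A th As ths i = U i"
    unfolding split_component_def U_def Vs_def Wd_def E_def Es_def ..
  have Vs_sub: "\<And>i. subspace_of n (Vs i)" unfolding Vs_def by (intro subspace_sum_sub) (simp add: imEs)
  have Wd_sub: "\<And>i. subspace_of n (Wd i)" unfolding Wd_def by (intro subspace_sum_sub) (simp add: imE)
  have U_sub: "\<And>i. subspace_of n (U i)" unfolding U_def using int_sub Vs_sub Wd_sub by blast
  have img_Vs: "\<And>j i. j \<le> i \<Longrightarrow> mat_image n (Es j) \<subseteq> Vs i"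
    unfolding Vs_def by (rule subspace_sum_ge) (use imEs in \<open>auto simp del: upt_Suc\<close>)
  have img_Wd: "\<And>j i. i \<le> j \<Longrightarrow> j \<le> d \<Longrightarrow> mat_image n (E j) \<subseteq> Wd i"
    unfolding Wd_def by (rule subspace_sum_ge) (use imE in \<open>auto simp del: upt_Suc\<close>)
  have Vs_mono: "\<And>i i'. i \<le> i' \<Longrightarrow> Vs i \<subseteq> Vs i'"
  proof -
    fix i i' :: nat assume "i \<le> i'"
    then show "Vs i \<subseteq> Vs i'" unfolding Vs_def[of i]
      by (intro subspace_sum_le[OF Vs_sub]) (use img_Vs in \<open>auto simp del: upt_Suc\<close>)
  qed
  have Wd_mono: "\<And>i i'. i' \<le> i \<Longrightarrow> Wd i \<subseteq> Wd i'"
  proof -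
    fix i i' :: nat assume "i' \<le> i"
    then show "Wd i \<subseteq> Wd i'" unfolding Wd_def[of i]
      by (intro subspace_sum_le[OF Wd_sub]) (use img_Wd in \<open>auto simp del: upt_Suc\<close>)
  qed
  have Wd_top: "carrier_vec n \<subseteq> Wd 0"
  proof
    fix y :: "'a vec" assume y: "y \<in> carrier_vec n"
    show "y \<in> Wd 0"
    proof (rule decomp[OF Ec Esum Wd_sub y], intro allI impI)
      fix k assume k: "k \<le> d"
      show "E k *\<^sub>v y \<in> Wd 0" using subsetD[OF img_Wd[OF le0 k] image_in[OF y]] .
    qed
  qed
  have Wd_bot: "Wd (Suc d) = {0\<^sub>v n}" unfolding Wd_def by simp
  have E_eig: "\<And>j u. j \<le> d \<Longrightarrow> u \<in> mat_image n (E j) \<Longrightarrow> A *\<^sub>v u = th j \<cdot>\<^sub>v u"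
  proof -
    fix j u assume j: "j \<le> d" and "u \<in> mat_image n (E j)"
    then obtain x where x: "x \<in> carrier_vec n" "u = E j *\<^sub>v x" unfolding mat_image_def by auto
    have "A *\<^sub>v u = (A * E j) *\<^sub>v x" using x assoc_mult_mat_vec[OF A Ec x(1)] by simp
    also have "\<dots> = th j \<cdot>\<^sub>v u" using EA[OF j] smult_mat_vec[OF Ec x(1)] x by simp
    finally show "A *\<^sub>v u = th j \<cdot>\<^sub>v u" .
  qed
  have Es_eig: "\<And>j u. j \<le> d \<Longrightarrow> u \<in> mat_image n (Es j) \<Longrightarrow> As *\<^sub>v u = ths j \<cdot>\<^sub>v u"
  proof -
    fix j u assume j: "j \<le> d" and "u \<in> mat_image n (Es j)"
    then obtain x where x: "x \<in> carrier_vec n" "u = Es j *\<^sub>v x" unfolding mat_image_def by auto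
    have "As *\<^sub>v u = (As * Es j) *\<^sub>v x" using x assoc_mult_mat_vec[OF As Esc x(1)] by simp
    also have "\<dots> = ths j \<cdot>\<^sub>v u" using EsAs[OF j] smult_mat_vec[OF Esc x(1)] x by simp
    finally show "As *\<^sub>v u = ths j \<cdot>\<^sub>v u" .
  qed
  have shiftAs: "\<And>j u. j \<le> d \<Longrightarrow> u \<in> mat_image n (E j) \<Longrightarrow> As *\<^sub>v u \<in> Wd (j - 1)"
  proof -
    fix j u assume j: "j \<le> d" and "u \<in> mat_image n (E j)"
    then obtain x where x: "x \<in> carrier_vec n" "u = E j *\<^sub>v x" unfolding mat_image_def by auto
    have y: "As *\<^sub>v u \<in> carrier_vec n" using mult_mat_vec_carrier[OF As mult_mat_vec_carrier[OF Ec x(1)]] x by simp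
    show "As *\<^sub>v u \<in> Wd (j - 1)"
    proof (rule decomp[OF Ec Esum Wd_sub y], intro allI impI)
      fix k assume k: "k \<le> d"
      show "E k *\<^sub>v (As *\<^sub>v u) \<in> Wd (j - 1)"
      proof (cases "j - 1 \<le> k")
        case True
        then show ?thesis using img_Wd[OF True k] image_in[OF y] by blast
      next
        case False
        then have "k + 1 < j" by simp
        then have z: "E k * As * E j = 0\<^sub>m n n" using tri1'[OF k j] by simp
        have "E k *\<^sub>v (As *\<^sub>v u) = (E k * As * E j) *\<^sub>v x"
          using x assoc_mult_mat_vec[OF mult_carrier_mat[OF Ec As] Ec x(1)] assoc_mult_mat_vec[OF Ec As mult_mat_vec_carrier[OF Ec x(1)]] by simp
        also have "\<dots> = 0\<^sub>v n" unfolding z using x by (intro eq_vecI) auto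
        finally show ?thesis using subspace_zero[OF Wd_sub] by simp
      qed
    qed
  qed
  have shiftA: "\<And>j u. j \<le> d \<Longrightarrow> u \<in> mat_image n (Es j) \<Longrightarrow> A *\<^sub>v u \<in> Vs (Suc j)"
  proof -
    fix j u assume j: "j \<le> d" and "u \<in> mat_image n (Es j)"
    then obtain x where x: "x \<in> carrier_vec n" "u = Es j *\<^sub>v x" unfolding mat_image_def by auto
    have y: "A *\<^sub>v u \<in> carrier_vec n" using mult_mat_vec_carrier[OF A mult_mat_vec_carrier[OF Esc x(1)]] x by simp
    show "A *\<^sub>v u \<in> Vs (Suc j)"
    proof (rule decomp[OF Esc Essum Vs_sub y], intro allI impI)
      fix k assume k: "k \<le> d"
      show "Es k *\<^sub>v (A *\<^sub>v u) \<in> Vs (Suc j)"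
      proof (cases "k \<le> Suc j")
        case True
        then show ?thesis using img_Vs[OF True] image_in[OF y] by blast
      next
        case False
        then have "j + 1 < k" by simp
        then have z: "Es k * A * Es j = 0\<^sub>m n n" using tri2'[OF k j] by simp
        have "Es k *\<^sub>v (A *\<^sub>v u) = (Es k * A * Es j) *\<^sub>v x"
          using x assoc_mult_mat_vec[OF mult_carrier_mat[OF Esc A] Esc x(1)] assoc_mult_mat_vec[OF Esc A mult_mat_vec_carrier[OF Esc x(1)]] by simp
        also have "\<dots> = 0\<^sub>v n" unfolding z using x by (intro eq_vecI) auto
        finally show ?thesis using subspace_zero[OF Vs_sub] by simp
      qed
    qed
  qed
  have MAc: "\<And>i. A - th i \<cdot>\<^sub>m 1\<^sub>m n \<in> carrier_mat n n" by (intro minus_carrier_mat) simp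
  have MAsc: "\<And>i. As - ths i \<cdot>\<^sub>m 1\<^sub>m n \<in> carrier_mat n n" by (intro minus_carrier_mat) simp
  have MAv: "\<And>i u. u \<in> carrier_vec n \<Longrightarrow> (A - th i \<cdot>\<^sub>m 1\<^sub>m n) *\<^sub>v u = A *\<^sub>v u - th i \<cdot>\<^sub>v u"
    using shift_vec[OF A] by blast
  have MAsv: "\<And>i u. u \<in> carrier_vec n \<Longrightarrow> (As - ths i \<cdot>\<^sub>m 1\<^sub>m n) *\<^sub>v u = As *\<^sub>v u - ths i \<cdot>\<^sub>v u"
    using shift_vec[OF As] by blast
  have Uc: "\<And>i u. u \<in> U i \<Longrightarrow> u \<in> carrier_vec n" using subspace_carrier[OF U_sub] by blast
  have imEc: "\<And>j v. v \<in> mat_image n (E j) \<Longrightarrow> v \<in> carrier_vec n" using subspace_carrier[OF imE] by blast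
  have imEsc: "\<And>j v. v \<in> mat_image n (Es j) \<Longrightarrow> v \<in> carrier_vec n" using subspace_carrier[OF imEs] by blast
  have stepA: "\<And>i u. i \<le> d \<Longrightarrow> u \<in> U i \<Longrightarrow> A *\<^sub>v u - th i \<cdot>\<^sub>v u \<in> U (Suc i)"
  proof -
    fix i u assume i: "i \<le> d" and u: "u \<in> U i"
    have W: "Wd i \<subseteq> {w \<in> carrier_vec n. (A - th i \<cdot>\<^sub>m 1\<^sub>m n) *\<^sub>v w \<in> Wd (Suc i)}"
      unfolding Wd_def[of i]
    proof (rule subspace_sum_le[OF preimage_sub[OF Wd_sub MAc]], intro ballI subsetI)
      fix j v assume j: "j \<in> set [i..<Suc d]" and v: "v \<in> mat_image n (E j)"
      have jd: "i \<le> j" "j \<le> d" using j by auto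
      have vc: "v \<in> carrier_vec n" using imEc[OF v] .
      have "(A - th i \<cdot>\<^sub>m 1\<^sub>m n) *\<^sub>v v = (th j - th i) \<cdot>\<^sub>v v"
        unfolding MAv[OF vc] E_eig[OF jd(2) v] using vc by (intro eq_vecI) (auto simp: algebra_simps)
      moreover have "(th j - th i) \<cdot>\<^sub>v v \<in> Wd (Suc i)"
      proof (cases "j = i")
        case True
        then have "(th j - th i) \<cdot>\<^sub>v v = 0\<^sub>v n" using vc by (intro eq_vecI) auto
        then show ?thesis using subspace_zero[OF Wd_sub] by simp
      next
        case False
        then have "Suc i \<le> j" using jd by simp
        then show ?thesis using subspace_smult[OF Wd_sub] img_Wd[OF _ jd(2)] v by blast
      qed
      ultimately show "v \<in> {w \<in> carrier_vec n. (A - th i \<cdot>\<^sub>m 1\<^sub>m n) *\<^sub>v w \<in> Wd (Suc i)}"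
        using vc by simp
    qed
    have V: "Vs i \<subseteq> {w \<in> carrier_vec n. (A - th i \<cdot>\<^sub>m 1\<^sub>m n) *\<^sub>v w \<in> Vs (Suc i)}"
      unfolding Vs_def[of i]
    proof (rule subspace_sum_le[OF preimage_sub[OF Vs_sub MAc]], intro ballI subsetI)
      fix j v assume j: "j \<in> set [0..<Suc i]" and v: "v \<in> mat_image n (Es j)"
      have ji: "j \<le> i" using j by (auto simp del: upt_Suc)
      have jd: "j \<le> d" using ji i by simp
      have vc: "v \<in> carrier_vec n" using imEsc[OF v] .
      have "A *\<^sub>v v \<in> Vs (Suc i)" using shiftA[OF jd v] Vs_mono[of "Suc j" "Suc i"] ji by auto
      moreover have "th i \<cdot>\<^sub>v v \<in> Vs (Suc i)"
        using subspace_smult[OF Vs_sub] img_Vs[of j "Suc i"] ji v by auto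
      ultimately have "A *\<^sub>v v - th i \<cdot>\<^sub>v v \<in> Vs (Suc i)" by (rule subspace_minus[OF Vs_sub])
      then show "v \<in> {w \<in> carrier_vec n. (A - th i \<cdot>\<^sub>m 1\<^sub>m n) *\<^sub>v w \<in> Vs (Suc i)}"
        using vc MAv[OF vc] by simp
    qed
    show "A *\<^sub>v u - th i \<cdot>\<^sub>v u \<in> U (Suc i)" using u W V MAv[OF Uc[OF u]] unfolding U_def by auto
  qed
  define Vm where "Vm i = (if i = 0 then {0\<^sub>v n} else Vs (i - 1))" for i
  have zsub: "subspace_of n {0\<^sub>v n :: 'a vec}" unfolding subspace_of_def by auto
  have Vm_sub: "\<And>i. subspace_of n (Vm i)" unfolding Vm_def using zsub Vs_sub by auto
  have stepAs: "\<And>i u. i \<le> d \<Longrightarrow> u \<in> U i \<Longrightarrow>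
      As *\<^sub>v u - ths i \<cdot>\<^sub>v u \<in> (if i = 0 then {0\<^sub>v n} else U (i - 1))"
  proof -
    fix i u assume i: "i \<le> d" and u: "u \<in> U i"
    have V: "Vs i \<subseteq> {w \<in> carrier_vec n. (As - ths i \<cdot>\<^sub>m 1\<^sub>m n) *\<^sub>v w \<in> Vm i}"
      unfolding Vs_def[of i]
    proof (rule subspace_sum_le[OF preimage_sub[OF Vm_sub MAsc]], intro ballI subsetI)
      fix j v assume j: "j \<in> set [0..<Suc i]" and v: "v \<in> mat_image n (Es j)"
      have ji: "j \<le> i" using j by (auto simp del: upt_Suc)
      have jd: "j \<le> d" using ji i by simp
      have vc: "v \<in> carrier_vec n" using imEsc[OF v] .
      have "(As - ths i \<cdot>\<^sub>m 1\<^sub>m n) *\<^sub>v v = (ths j - ths i) \<cdot>\<^sub>v v"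
        unfolding MAsv[OF vc] Es_eig[OF jd v] using vc by (intro eq_vecI) (auto simp: algebra_simps)
      moreover have "(ths j - ths i) \<cdot>\<^sub>v v \<in> Vm i"
      proof (cases "j = i")
        case True
        then have "(ths j - ths i) \<cdot>\<^sub>v v = 0\<^sub>v n" using vc by (intro eq_vecI) auto
        then show ?thesis using subspace_zero[OF Vm_sub] by simp
      next
        case False
        then have "i \<noteq> 0" "j \<le> i - 1" using ji by auto
        then have "v \<in> Vm i" unfolding Vm_def using img_Vs[of j "i - 1"] v by auto
        then show ?thesis using subspace_smult[OF Vm_sub] by blast
      qed
      ultimately show "v \<in> {w \<in> carrier_vec n. (As - ths i \<cdot>\<^sub>m 1\<^sub>m n) *\<^sub>v w \<in> Vm i}"
        using vc by simp
    qed
    have W: "Wd i \<subseteq> {w \<in> carrier_vec n. (As - ths i \<cdot>\<^sub>m 1\<^sub>m n) *\<^sub>v w \<in> Wd (i - 1)}"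
      unfolding Wd_def[of i]
    proof (rule subspace_sum_le[OF preimage_sub[OF Wd_sub MAsc]], intro ballI subsetI)
      fix j v assume j: "j \<in> set [i..<Suc d]" and v: "v \<in> mat_image n (E j)"
      have jd: "i \<le> j" "j \<le> d" using j by auto
      have vc: "v \<in> carrier_vec n" using imEc[OF v] .
      have ij: "i - 1 \<le> j - 1" using jd by simp
      have "As *\<^sub>v v \<in> Wd (i - 1)" using subsetD[OF Wd_mono[OF ij] shiftAs[OF jd(2) v]] .
      moreover have "ths i \<cdot>\<^sub>v v \<in> Wd (i - 1)"
        using subspace_smult[OF Wd_sub subsetD[OF img_Wd[of "i - 1" j] v]] jd by simp
      ultimately have "As *\<^sub>v v - ths i \<cdot>\<^sub>v v \<in> Wd (i - 1)" by (rule subspace_minus[OF Wd_sub])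
      then show "v \<in> {w \<in> carrier_vec n. (As - ths i \<cdot>\<^sub>m 1\<^sub>m n) *\<^sub>v w \<in> Wd (i - 1)}"
        using vc MAsv[OF vc] by simp
    qed
    have "As *\<^sub>v u - ths i \<cdot>\<^sub>v u \<in> Vm i \<inter> Wd (i - 1)"
      using u W V MAsv[OF Uc[OF u]] unfolding U_def by auto
    then show "As *\<^sub>v u - ths i \<cdot>\<^sub>v u \<in> (if i = 0 then {0\<^sub>v n} else U (i - 1))"
      unfolding Vm_def U_def by auto
  qed
  define Wt where "Wt = subspace_sum n U [0..<Suc d]"
  have Wt_sub: "subspace_of n Wt" unfolding Wt_def by (intro subspace_sum_sub) (simp add: U_sub)
  have U_Wt: "\<And>i. i \<le> d \<Longrightarrow> U i \<subseteq> Wt"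
    unfolding Wt_def by (rule subspace_sum_ge) (use U_sub in \<open>auto simp del: upt_Suc\<close>)
  have invA: "invariant_under n A Wt"
    unfolding invariant_under_def
  proof
    fix w assume w: "w \<in> Wt"
    have "subspace_sum n U [0..<Suc d] \<subseteq> {v\<in>carrier_vec n. A *\<^sub>v v \<in> Wt}"
    proof (rule subspace_sum_le[OF preimage_sub[OF Wt_sub A]], intro ballI subsetI)
      fix i v assume i: "i \<in> set [0..<Suc d]" and v: "v \<in> U i"
      have id: "i \<le> d" using i by (auto simp del: upt_Suc)
      have vc: "v \<in> carrier_vec n" using Uc[OF v] .
      have e: "A *\<^sub>v v = (A *\<^sub>v v - th i \<cdot>\<^sub>v v) + th i \<cdot>\<^sub>v v" using vc A by (intro eq_vecI) auto
      have "A *\<^sub>v v - th i \<cdot>\<^sub>v v \<in> Wt"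
      proof (cases "i = d")
        case True
        then have "A *\<^sub>v v - th i \<cdot>\<^sub>v v \<in> Wd (Suc d)" using stepA[OF id v] unfolding U_def by auto
        then show ?thesis using Wd_bot subspace_zero[OF Wt_sub] by simp
      next
        case False
        then show ?thesis using stepA[OF id v] U_Wt[of "Suc i"] id by auto
      qed
      moreover have "th i \<cdot>\<^sub>v v \<in> Wt" using subspace_smult[OF Wt_sub] U_Wt[OF id] v by auto
      ultimately have "A *\<^sub>v v \<in> Wt" using e subspace_add[OF Wt_sub] by metis
      then show "v \<in> {v\<in>carrier_vec n. A *\<^sub>v v \<in> Wt}" using vc by simp
    qed
    then show "A *\<^sub>v w \<in> Wt" using w unfolding Wt_def by auto
  qed
  have invAs: "invariant_under n As Wt"
    unfolding invariant_under_def
  proof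
    fix w assume w: "w \<in> Wt"
    have "subspace_sum n U [0..<Suc d] \<subseteq> {v\<in>carrier_vec n. As *\<^sub>v v \<in> Wt}"
    proof (rule subspace_sum_le[OF preimage_sub[OF Wt_sub As]], intro ballI subsetI)
      fix i v assume i: "i \<in> set [0..<Suc d]" and v: "v \<in> U i"
      have id: "i \<le> d" using i by (auto simp del: upt_Suc)
      have vc: "v \<in> carrier_vec n" using Uc[OF v] .
      have e: "As *\<^sub>v v = (As *\<^sub>v v - ths i \<cdot>\<^sub>v v) + ths i \<cdot>\<^sub>v v" using vc As by (intro eq_vecI) auto
      have "As *\<^sub>v v - ths i \<cdot>\<^sub>v v \<in> Wt"
      proof (cases "i = 0")
        case True
        then show ?thesis using stepAs[OF id v] subspace_zero[OF Wt_sub] by simp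
      next
        case False
        have "i - 1 \<le> d" using id by simp
        then show ?thesis using stepAs[OF id v] U_Wt[of "i - 1"] False by (simp add: subset_iff)
      qed
      moreover have "ths i \<cdot>\<^sub>v v \<in> Wt" using subspace_smult[OF Wt_sub] U_Wt[OF id] v by auto
      ultimately have "As *\<^sub>v v \<in> Wt" using e subspace_add[OF Wt_sub] by metis
      then show "v \<in> {v\<in>carrier_vec n. As *\<^sub>v v \<in> Wt}" using vc by simp
    qed
    then show "As *\<^sub>v w \<in> Wt" using w unfolding Wt_def by auto
  qed
  have "ths 0 \<in> {e. eigenvalue As e}" unfolding evAs by auto
  then obtain v where vc: "v \<in> carrier_vec n" and vnz: "v \<noteq> 0\<^sub>v n" and Av: "As *\<^sub>v v = ths 0 \<cdot>\<^sub>v v"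
    unfolding eigenvalue_def eigenvector_def using As by auto
  have "Es 0 *\<^sub>v v = v" using prim_idem_eig[OF As injAs le0 le0 vc Av] unfolding Es_def by simp
  then have "v \<in> Vs 0" using img_Vs[of 0 0] image_in[OF vc, of "Es 0"] by auto
  moreover have "v \<in> Wd 0" using Wd_top vc by auto
  ultimately have "v \<in> Wt" using U_Wt[of 0] unfolding U_def by auto
  then have Wt_all: "Wt = carrier_vec n" using irr Wt_sub invA invAs vnz by blast
  have qq: "q - inverse q \<noteq> 0"
  proof
    assume "q - inverse q = 0"
    then have "q * q = q * inverse q" by simp
    then have "q ^ 2 = 1" using q by (simp add: power2_eq_square)
    then show False using assms(4) by (metis zero_less_numeral)
  qed
  have s1: "\<And>i. th i * ths i = 1" unfolding th_def ths_def using powi_facts(1)[OF q] .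
  have s2: "\<And>i. q * ths (Suc i) = inverse q * ths i" unfolding ths_def using powi_facts(2)[OF q] .
  have s3: "\<And>i. ths i \<noteq> 0" unfolding ths_def using powi_facts(3)[OF q] .
  have KU: "\<And>i u. i \<le> d \<Longrightarrow> u \<in> U i \<Longrightarrow> K *\<^sub>v u = ths i \<cdot>\<^sub>v u" using Khyp U_split by auto
  have KiU: "\<And>i u. i \<le> d \<Longrightarrow> u \<in> U i \<Longrightarrow> Kinv *\<^sub>v u = inverse (ths i) \<cdot>\<^sub>v u"
  proof -
    fix i u assume i: "i \<le> d" and u: "u \<in> U i"
    have uc: "u \<in> carrier_vec n" using Uc[OF u] .
    have "u = (Kinv * K) *\<^sub>v u" using KiK uc by simp
    also have "\<dots> = Kinv *\<^sub>v (K *\<^sub>v u)" using assoc_mult_mat_vec[OF Kic Kc uc] .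
    also have "\<dots> = ths i \<cdot>\<^sub>v (Kinv *\<^sub>v u)" using KU[OF i u] mult_mat_vec[OF Kic uc] by simp
    finally have e: "u = ths i \<cdot>\<^sub>v (Kinv *\<^sub>v u)" .
    show "Kinv *\<^sub>v u = inverse (ths i) \<cdot>\<^sub>v u"
      by (subst (2) e) (use s3[of i] Kic uc in \<open>auto intro!: eq_vecI\<close>)
  qed
  let ?N1 = "(1 / (q - inverse q)) \<cdot>\<^sub>m (q \<cdot>\<^sub>m (K * A) - inverse q \<cdot>\<^sub>m (A * K))"
  let ?N2 = "(1 / (q - inverse q)) \<cdot>\<^sub>m (q \<cdot>\<^sub>m (Kinv * As) - inverse q \<cdot>\<^sub>m (As * Kinv))"
  have N1c: "?N1 \<in> carrier_mat n n" using Kc A by (auto intro!: minus_carrier_mat)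
  have N2c: "?N2 \<in> carrier_mat n n" using Kic As by (auto intro!: minus_carrier_mat)
  have "subspace_sum n U [0..<Suc d] \<subseteq> {v\<in>carrier_vec n. ?N1 *\<^sub>v v = v}"
  proof (rule subspace_sum_le[OF fixed_sub[OF N1c]], intro ballI subsetI)
    fix i u assume i: "i \<in> set [0..<Suc d]" and u: "u \<in> U i"
    have id: "i \<le> d" using i by (auto simp del: upt_Suc)
    have uc: "u \<in> carrier_vec n" using Uc[OF u] .
    define w where "w = A *\<^sub>v u - th i \<cdot>\<^sub>v u"
    have wc: "w \<in> carrier_vec n" unfolding w_def using A uc by simp
    have Au: "A *\<^sub>v u = th i \<cdot>\<^sub>v u + w" unfolding w_def using uc A by (intro eq_vecI) auto
    have Kw: "K *\<^sub>v w = ths (Suc i) \<cdot>\<^sub>v w"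
    proof (cases "i = d")
      case True
      then have "w \<in> Wd (Suc d)" using stepA[OF id u] unfolding U_def w_def by auto
      then have "w = 0\<^sub>v n" using Wd_bot by auto
      then show ?thesis using mat_vec_zero[OF Kc] by (auto intro!: eq_vecI)
    next
      case False
      then show ?thesis using KU[of "Suc i" w] stepA[OF id u] id unfolding w_def by auto
    qed
    have Ku: "K *\<^sub>v u = ths i \<cdot>\<^sub>v u" using KU[OF id u] .
    have KAu: "K *\<^sub>v (A *\<^sub>v u) = th i \<cdot>\<^sub>v (ths i \<cdot>\<^sub>v u) + ths (Suc i) \<cdot>\<^sub>v w"
      unfolding Au using mult_add_distrib_mat_vec[OF Kc _ wc, of "th i \<cdot>\<^sub>v u"] mult_mat_vec[OF Kc uc] Ku Kw uc
      by simp
    have AKu: "A *\<^sub>v (K *\<^sub>v u) = ths i \<cdot>\<^sub>v (th i \<cdot>\<^sub>v u + w)"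
      unfolding Ku mult_mat_vec[OF A uc] Au ..
    have "?N1 *\<^sub>v u = u"
      unfolding combo[OF Kc A uc] KAu AKu
      using uc wc scal[OF qq s1 disjI1[OF s2]] by (intro eq_vecI) auto
    then show "u \<in> {v\<in>carrier_vec n. ?N1 *\<^sub>v v = v}" using uc by simp
  qed
  then have N1: "?N1 = 1\<^sub>m n" using Wt_all unfolding Wt_def by (intro ident[OF N1c]) auto
  have "subspace_sum n U [0..<Suc d] \<subseteq> {v\<in>carrier_vec n. ?N2 *\<^sub>v v = v}"
  proof (rule subspace_sum_le[OF fixed_sub[OF N2c]], intro ballI subsetI)
    fix i u assume i: "i \<in> set [0..<Suc d]" and u: "u \<in> U i"
    have id: "i \<le> d" using i by (auto simp del: upt_Suc)
    have uc: "u \<in> carrier_vec n" using Uc[OF u] .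
    define w where "w = As *\<^sub>v u - ths i \<cdot>\<^sub>v u"
    have wc: "w \<in> carrier_vec n" unfolding w_def using As uc by simp
    have Au: "As *\<^sub>v u = ths i \<cdot>\<^sub>v u + w" unfolding w_def using uc As by (intro eq_vecI) auto
    have wz: "w \<in> (if i = 0 then {0\<^sub>v n} else U (i - 1))" using stepAs[OF id u] unfolding w_def .
    have Kw: "Kinv *\<^sub>v w = inverse (ths (i - 1)) \<cdot>\<^sub>v w"
    proof (cases "i = 0")
      case True
      then have "w = 0\<^sub>v n" using wz by simp
      then show ?thesis using mat_vec_zero[OF Kic] by (auto intro!: eq_vecI)
    next
      case False
      then show ?thesis using KiU[of "i - 1" w] wz id by auto
    qed
    have rel: "q * inverse (ths (i - 1)) = inverse q * inverse (ths i) \<or> w = 0\<^sub>v n"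
    proof (cases "i = 0")
      case True
      then show ?thesis using wz by simp
    next
      case False
      then obtain m where m: "i = Suc m" by (cases i) auto
      have "q * ths i = inverse q * ths m" using s2[of m] m by simp
      then have "q * inverse (ths m) = inverse q * inverse (ths i)"
        using s3[of m] s3[of i] q by (simp add: field_simps)
      then show ?thesis using m by simp
    qed
    have rel': "\<And>k. k < n \<Longrightarrow> q * inverse (ths (i - 1)) = inverse q * inverse (ths i) \<or> w $ k = 0"
      using rel by auto
    have Ku: "Kinv *\<^sub>v u = inverse (ths i) \<cdot>\<^sub>v u" using KiU[OF id u] .
    have KAu: "Kinv *\<^sub>v (As *\<^sub>v u) = ths i \<cdot>\<^sub>v (inverse (ths i) \<cdot>\<^sub>v u) + inverse (ths (i - 1)) \<cdot>\<^sub>v w"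
      unfolding Au using mult_add_distrib_mat_vec[OF Kic _ wc, of "ths i \<cdot>\<^sub>v u"] mult_mat_vec[OF Kic uc] Ku Kw uc
      by simp
    have AKu: "As *\<^sub>v (Kinv *\<^sub>v u) = inverse (ths i) \<cdot>\<^sub>v (ths i \<cdot>\<^sub>v u + w)"
      unfolding Ku mult_mat_vec[OF As uc] Au ..
    have ts: "ths i * inverse (ths i) = 1" using s3[of i] by simp
    have "?N2 *\<^sub>v u = u"
      unfolding combo[OF Kic As uc] KAu AKu
    proof (intro eq_vecI)
      fix k assume "k < dim_vec u"
      then have k: "k < n" using uc by simp
      show "(1 / (q - inverse q) \<cdot>\<^sub>v
          (q \<cdot>\<^sub>v (ths i \<cdot>\<^sub>v (inverse (ths i) \<cdot>\<^sub>v u) + inverse (ths (i - 1)) \<cdot>\<^sub>v w) -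
           inverse q \<cdot>\<^sub>v (inverse (ths i) \<cdot>\<^sub>v (ths i \<cdot>\<^sub>v u + w)))) $ k = u $ k"
        using uc wc k scal[OF qq ts rel'[OF k]] by simp
    qed (use uc wc in simp)
    then show "u \<in> {v\<in>carrier_vec n. ?N2 *\<^sub>v v = v}" using uc by simp
  qed
  then have N2: "?N2 = 1\<^sub>m n" using Wt_all unfolding Wt_def by (intro ident[OF N2c]) auto
  show ?thesis using N1 N2 by simp
qed

end
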